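(* Let $\mathbf{k}=(k_1,k_2,\ldots)\in\mathcal{T}$ and set $\Delta_r=\zeta^{\star}(k_1,\ldots,k_r,1)-\zeta^{\star}(k_1,\ldots,k_r)$. Then $\lim_{r\to\infty}\Delta_r=0$.
   Context: $\zeta^{\star}(k_1,\ldots,k_r)=\sum_{n_1\geq\cdots\geq n_r\geq 1}\frac{1}{n_1^{k_1}\cdots n_r^{k_r}}$ for $k_1\geq2$, $k_2,\ldots,k_r\geq1$. $\mathcal{T}$ is the set of infinite sequences $(k_1,k_2,\ldots)$ of positive integers with $k_1\geq2$ and such that if $k_1=2$ then $k_s\geq2$ for some $s\geq2$. *)

theory Defs
  imports "HOL-Analysis.Analysis"
begin

definition zeta_star :: "nat list \<Rightarrow> real" where
  "zeta_star ks =
     infsum (\<lambda>ns. 1 / (\<Prod>i<length ks. real (ns ! i) ^ (ks ! i)))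
       {ns. length ns = length ks \<and> sorted_wrt (\<ge>) ns \<and> (\<forall>n\<in>set ns. n \<ge> 1)}"

text \<open>The set T of infinite index sequences, indexed from 0 (k 0 = k_1).\<close>
definition in_T :: "(nat \<Rightarrow> nat) \<Rightarrow> bool" where
  "in_T k \<longleftrightarrow> (\<forall>i. k i \<ge> 1) \<and> k 0 \<ge> 2 \<and> (k 0 = 2 \<longrightarrow> (\<exists>s\<ge>1. k s \<ge> 2))"

end

theory Submission
  imports Defs
begin

definition Dl :: "nat \<Rightarrow> nat \<Rightarrow> nat \<Rightarrow> nat list set" where
  "Dl j lo hi = {ns. length ns = j \<and> sorted_wrt (\<ge>) ns \<and> set ns \<subseteq> {lo..hi}}"

definition PW :: "(nat \<Rightarrow> nat \<Rightarrow> real) \<Rightarrow> nat list \<Rightarrow> real" where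
  "PW w ns = (\<Prod>i<length ns. w i (ns!i))"

lemma finite_Dl: "finite (Dl j lo hi)"
proof -
  have "Dl j lo hi \<subseteq> {xs. set xs \<subseteq> {lo..hi} \<and> length xs = j}" by (auto simp: Dl_def)
  thus ?thesis using finite_lists_length_eq[of "{lo..hi}" j] finite_subset by blast
qed

lemma Dl_0: "Dl 0 lo hi = {[]}" by (auto simp: Dl_def)

lemma Dl_Suc: "Dl (Suc j) lo hi = (\<Union>x\<in>{lo..hi}. (\<lambda>xs. x#xs) ` Dl j lo x)"
proof (rule set_eqI)
  fix ns
  show "ns \<in> Dl (Suc j) lo hi \<longleftrightarrow> ns \<in> (\<Union>x\<in>{lo..hi}. (\<lambda>xs. x#xs) ` Dl j lo x)"
  proof
    assume "ns \<in> Dl (Suc j) lo hi"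
    then obtain x xs where ns: "ns = x#xs" and l: "length xs = j" and s: "sorted_wrt (\<ge>) (x#xs)"
      and st: "set (x#xs) \<subseteq> {lo..hi}"
      unfolding Dl_def by (cases ns) auto
    have "xs \<in> Dl j lo x" using l s st by (auto simp: Dl_def)
    moreover have "x \<in> {lo..hi}" using st by auto
    ultimately show "ns \<in> (\<Union>x\<in>{lo..hi}. (\<lambda>xs. x#xs) ` Dl j lo x)" using ns by blast
  next
    assume "ns \<in> (\<Union>x\<in>{lo..hi}. (\<lambda>xs. x#xs) ` Dl j lo x)"
    then obtain x xs where "x \<in> {lo..hi}" "xs \<in> Dl j lo x" "ns = x#xs" by blast
    thus "ns \<in> Dl (Suc j) lo hi" by (auto simp: Dl_def)
  qed
qed

lemma sum_Dl_Suc: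
  "(\<Sum>ns\<in>Dl (Suc j) lo hi. F ns) = (\<Sum>x=lo..hi. \<Sum>xs\<in>Dl j lo x. F (x#xs))"
proof -
  have "(\<Sum>ns\<in>Dl (Suc j) lo hi. F ns) = (\<Sum>x=lo..hi. \<Sum>ns\<in>(\<lambda>xs. x#xs) ` Dl j lo x. F ns)"
    unfolding Dl_Suc by (rule sum.UNION_disjoint) (auto simp: finite_Dl)
  also have "\<dots> = (\<Sum>x=lo..hi. \<Sum>xs\<in>Dl j lo x. F (x#xs))"
    by (rule sum.cong[OF refl], subst sum.reindex) (auto simp: inj_on_def)
  finally show ?thesis .
qed

lemma PW_Cons: "PW w (x#xs) = w 0 x * PW (\<lambda>i. w (Suc i)) xs"
  unfolding PW_def by (simp only: length_Cons prod.lessThan_Suc_shift nth_Cons_0 nth_Cons_Suc)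

lemma PW_nonneg: "(\<And>i y. 0 \<le> w i y) \<Longrightarrow> 0 \<le> PW w ns"
  unfolding PW_def by (simp add: prod_nonneg)

lemma tail_bound:
  "(\<Sum>j\<le>J. \<Sum>ns\<in>Dl j 2 x. PW (\<lambda>_ y. 1 / real y) ns) \<le> max 1 (real x)"
proof (induction J arbitrary: x)
  case 0
  then show ?case by (simp add: Dl_0 PW_def)
next
  case (Suc J)
  have "(\<Sum>j\<le>Suc J. \<Sum>ns\<in>Dl j 2 x. PW (\<lambda>_ y. 1 / real y) ns)
      = 1 + (\<Sum>j\<le>J. \<Sum>ns\<in>Dl (Suc j) 2 x. PW (\<lambda>_ y. 1 / real y) ns)"
    by (subst sum.atMost_Suc_shift) (simp add: Dl_0 PW_def)
  also have "(\<Sum>j\<le>J. \<Sum>ns\<in>Dl (Suc j) 2 x. PW (\<lambda>_ y. 1 / real y) ns)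
     = (\<Sum>y=2..x. (1 / real y) * (\<Sum>j\<le>J. \<Sum>xs\<in>Dl j 2 y. PW (\<lambda>_ y. 1 / real y) xs))"
    by (simp add: sum_Dl_Suc PW_Cons sum_distrib_left sum.swap[of _ "{2..x}"])
  also have "\<dots> \<le> (\<Sum>y=2..x. (1 / real y) * max 1 (real y))"
    by (intro sum_mono mult_left_mono Suc.IH) auto
  also have "\<dots> = (\<Sum>y=2..x. 1)"
    by (intro sum.cong) auto
  finally show ?case by auto
qed


lemma harm_tele: "(\<Sum>y=1..x. harm y ^ p / real y) \<le> (harm x :: real) ^ Suc p"
proof (induction x)
  case 0
  then show ?case by (simp add: harm_expand)
next
  case (Suc x)
  define a :: real where "a = harm (Suc x)"
  define b :: real where "b = harm x"
  have ab: "a = b + 1 / real (Suc x)" unfolding a_def b_def by (simp add: harm_Suc field_simps)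
  have b0: "0 \<le> b" unfolding b_def by (rule harm_nonneg)
  have ba: "b \<le> a" using ab by simp
  have "b ^ Suc p = b ^ p * b" by simp
  also have "\<dots> \<le> a ^ p * b" by (intro mult_right_mono power_mono b0 ba)
  finally have key: "b ^ Suc p \<le> a ^ p * b" .
  have "(\<Sum>y=1..Suc x. harm y ^ p / real y) = (\<Sum>y=1..x. harm y ^ p / real y) + a ^ p / real (Suc x)"
    by (simp add: a_def)
  also have "\<dots> \<le> b ^ Suc p + a ^ p / real (Suc x)" using Suc.IH by (simp add: b_def)
  also have "\<dots> \<le> a ^ p * b + a ^ p * (1 / real (Suc x))" using key by simp
  also have "\<dots> = a ^ Suc p" by (simp add: ab algebra_simps)
  finally show ?case by (simp add: a_def)
qed

definition wt :: "nat \<Rightarrow> nat \<Rightarrow> nat \<Rightarrow> real" where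
  "wt t i y = (if i = t then 1 / real y ^ 2 else 1 / real y)"

lemma sum_Icc_2_le_1:
  fixes f :: "nat \<Rightarrow> real" and x :: nat
  assumes "\<And>y. 0 \<le> f y" shows "(\<Sum>y=2..x. f y) \<le> (\<Sum>y=1..x. f y)"
  by (rule sum_mono2) (auto simp: assms)

lemma mid_bound:
  "(\<Sum>m\<le>J. \<Sum>ns\<in>Dl (t+1+m) 2 x. PW (wt t) ns) \<le> (harm x :: real) ^ (t+1)"
proof (induction t arbitrary: x)
  case 0
  have e: "(\<lambda>i. wt 0 (Suc i)) = (\<lambda>_ y. 1 / real y)" by (auto simp: wt_def fun_eq_iff)
  have "(\<Sum>m\<le>J. \<Sum>ns\<in>Dl (0+1+m) 2 x. PW (wt 0) ns)
     = (\<Sum>y=2..x. (1 / real y ^ 2) * (\<Sum>m\<le>J. \<Sum>xs\<in>Dl m 2 y. PW (\<lambda>_ y. 1 / real y) xs))"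
    by (simp add: sum_Dl_Suc PW_Cons sum_distrib_left sum.swap[of _ "{2..x}"] e wt_def)
  also have "\<dots> \<le> (\<Sum>y=2..x. (1 / real y ^ 2) * max 1 (real y))"
    by (intro sum_mono mult_left_mono tail_bound) auto
  also have "\<dots> = (\<Sum>y=2..x. harm y ^ 0 / real y)"
    by (intro sum.cong) (auto simp: power2_eq_square)
  also have "\<dots> \<le> (\<Sum>y=1..x. harm y ^ 0 / real y)"
    by (rule sum_Icc_2_le_1) auto
  also have "\<dots> \<le> harm x ^ Suc 0" by (rule harm_tele)
  finally show ?case by simp
next
  case (Suc t)
  have e: "(\<lambda>i. wt (Suc t) (Suc i)) = wt t" by (auto simp: wt_def fun_eq_iff)
  have "(\<Sum>m\<le>J. \<Sum>ns\<in>Dl (Suc t+1+m) 2 x. PW (wt (Suc t)) ns)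
     = (\<Sum>y=2..x. (1 / real y) * (\<Sum>m\<le>J. \<Sum>xs\<in>Dl (t+1+m) 2 y. PW (wt t) xs))"
    by (simp add: sum_Dl_Suc PW_Cons sum_distrib_left sum.swap[of _ "{2..x}"] e wt_def)
  also have "\<dots> \<le> (\<Sum>y=2..x. (1 / real y) * harm y ^ (t+1))"
    by (intro sum_mono mult_left_mono Suc.IH) auto
  also have "\<dots> \<le> (\<Sum>y=1..x. harm y ^ (t+1) / real y)"
    by (rule order_trans[OF _ sum_Icc_2_le_1]) (auto intro!: harm_nonneg divide_nonneg_nonneg mult_nonneg_nonneg zero_le_power)
  also have "\<dots> \<le> harm x ^ Suc (t+1)" by (rule harm_tele)
  finally show ?case by simp
qed

lemma ones_bound:
  "(\<Sum>ns\<in>Dl j 1 x. PW (\<lambda>_ y. 1 / real y) ns) \<le> (harm x :: real) ^ j"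
proof (induction j arbitrary: x)
  case 0
  then show ?case by (simp add: Dl_0 PW_def)
next
  case (Suc j)
  have "(\<Sum>ns\<in>Dl (Suc j) 1 x. PW (\<lambda>_ y. 1 / real y) ns)
     = (\<Sum>y=1..x. (1 / real y) * (\<Sum>xs\<in>Dl j 1 y. PW (\<lambda>_ y. 1 / real y) xs))"
    by (simp add: sum_Dl_Suc PW_Cons sum_distrib_left)
  also have "\<dots> \<le> (\<Sum>y=1..x. (1 / real y) * harm y ^ j)"
    by (intro sum_mono mult_left_mono Suc.IH) auto
  also have "\<dots> = (\<Sum>y=1..x. harm y ^ j / real y)" by simp
  also have "\<dots> \<le> harm x ^ Suc j" by (rule harm_tele)
  finally show ?case .
qed

lemma harm_le_powr:
  assumes "p > 0" "n > 0"
  shows "(harm n :: real) \<le> (1 + 2 * real p) * real n powr (1 / (2 * real p))"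
proof -
  have "harm n - ln (real n) \<le> harm 1 - ln (real 1)"
    using euler_mascheroni_sequence_decreasing[of 1 n] assms by simp
  hence h1: "harm n \<le> 1 + ln (real n)" by (simp add: harm_expand)
  define q where "q = real n powr (1 / (2 * real p))"
  have q1: "q \<ge> 1" unfolding q_def using assms by (simp add: ge_one_powr_ge_zero)
  have "ln q \<le> q - 1" using q1 by (intro ln_le_minus_one) auto
  moreover have "ln q = ln (real n) / (2 * real p)" unfolding q_def using assms by simp
  ultimately have "ln (real n) \<le> 2 * real p * q" using assms by (simp add: field_simps)
  hence "harm n \<le> 1 + 2 * real p * q" using h1 by simp
  also have "\<dots> \<le> q + 2 * real p * q" using q1 by simp
  finally show ?thesis unfolding q_def by (simp add: algebra_simps)
qed

lemma harm_sq_bound: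
  assumes "p > 0"
  shows "\<exists>B. \<forall>N. (\<Sum>x=1..N. (harm x :: real) ^ p / real x ^ 2) \<le> B"
proof -
  define C where "C = (1 + 2 * real p) ^ p"
  have le: "(harm x :: real) ^ p / real x ^ 2 \<le> C * real x powr (-3/2)" if "x \<ge> 1" for x
  proof -
    have "(harm x :: real) ^ p \<le> ((1 + 2 * real p) * real x powr (1 / (2 * real p))) ^ p"
      by (intro power_mono harm_le_powr harm_nonneg) (use assms that in auto)
    also have "\<dots> = C * real x powr (1/2)"
      unfolding C_def power_mult_distrib using assms that
      by (simp add: powr_power)
    finally have "(harm x :: real) ^ p / real x ^ 2 \<le> C * real x powr (1/2) / real x ^ 2"
      using that by (simp add: divide_right_mono)
    also have "\<dots> = C * real x powr (-3/2)"
    proof -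
      have "real x ^ 2 = real x powr 2" using that by (simp add: powr_realpow')
      moreover have "real x powr (1/2 - 2) = real x powr (1/2) / real x powr 2"
        by (rule powr_diff)
      ultimately have h: "real x powr (1/2) / real x ^ 2 = real x powr (-3/2)" by simp
      have "C * (real x powr (1/2) / real x ^ 2) = C * real x powr (-3/2)" by (simp only: h)
      thus ?thesis by simp
    qed
    finally show ?thesis .
  qed
  have sm: "summable (\<lambda>n. real n powr (-3/2))" by (subst summable_real_powr_iff) auto
  have "(\<Sum>x=1..N. (harm x :: real) ^ p / real x ^ 2) \<le> C * (\<Sum>n. real n powr (-3/2))" for N
  proof -
    have "(\<Sum>x=1..N. (harm x :: real) ^ p / real x ^ 2) \<le> (\<Sum>x=1..N. C * real x powr (-3/2))"
      by (intro sum_mono le) auto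
    also have "\<dots> \<le> (\<Sum>x<Suc N. C * real x powr (-3/2))"
      by (rule sum_mono2) (auto simp: C_def)
    also have "\<dots> \<le> (\<Sum>n. C * real n powr (-3/2))"
      by (intro sum_le_suminf summable_mult sm) (auto simp: C_def)
    also have "\<dots> = C * (\<Sum>n. real n powr (-3/2))" by (intro suminf_mult sm)
    finally show ?thesis .
  qed
  thus ?thesis by blast
qed


lemma recip_prod_le:
  fixes a b :: "nat \<Rightarrow> real"
  assumes "0 < s" "s < L" "\<And>i. i < L \<Longrightarrow> 0 < b i" "b 0 * b s \<le> a 0 * a s"
    "\<And>i. i < L \<Longrightarrow> i \<noteq> 0 \<Longrightarrow> i \<noteq> s \<Longrightarrow> b i \<le> a i"
  shows "1 / (\<Prod>i<L. a i) \<le> (\<Prod>i<L. 1 / b i)"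
proof -
  have split: "(\<Prod>i<L. f i) = f 0 * f s * (\<Prod>i\<in>{..<L}-{0}-{s}. f i)" for f :: "nat \<Rightarrow> real"
  proof -
    have "(\<Prod>i<L. f i) = f 0 * (\<Prod>i\<in>{..<L}-{0}. f i)"
      by (rule prod.remove) (use assms in auto)
    also have "(\<Prod>i\<in>{..<L}-{0}. f i) = f s * (\<Prod>i\<in>{..<L}-{0}-{s}. f i)"
      by (rule prod.remove) (use assms in auto)
    finally show ?thesis by simp
  qed
  have bpos: "0 < (\<Prod>i<L. b i)" by (intro prod_pos) (use assms in auto)
  have "(\<Prod>i\<in>{..<L}-{0}-{s}. b i) \<le> (\<Prod>i\<in>{..<L}-{0}-{s}. a i)"
    by (intro prod_mono) (use assms in \<open>auto intro: less_imp_le\<close>)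
  moreover have "0 \<le> (\<Prod>i\<in>{..<L}-{0}-{s}. b i)"
    by (intro prod_nonneg) (use assms in \<open>auto intro: less_imp_le\<close>)
  moreover have "0 \<le> b 0 * b s" using assms by (intro mult_nonneg_nonneg) (auto intro: less_imp_le)
  ultimately have "b 0 * b s * (\<Prod>i\<in>{..<L}-{0}-{s}. b i) \<le> a 0 * a s * (\<Prod>i\<in>{..<L}-{0}-{s}. a i)"
    using assms(4) mult_mono by (metis order_trans)
  hence "(\<Prod>i<L. b i) \<le> (\<Prod>i<L. a i)"
    unfolding split[of b] split[of a] .
  hence "1 / (\<Prod>i<L. a i) \<le> 1 / (\<Prod>i<L. b i)" using bpos by (intro divide_left_mono) auto
  also have "\<dots> = (\<Prod>i<L. 1 / b i)" by (simp add: prod_dividef)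
  finally show ?thesis .
qed

lemma pow_pair:
  fixes x y :: real
  assumes "1 \<le> y" "y \<le> x" "2 \<le> k0" "1 \<le> ks" "4 \<le> k0 + ks"
  shows "x ^ 2 * y ^ 2 \<le> x ^ k0 * y ^ ks"
proof (cases "ks \<ge> 2")
  case True
  have "x ^ 2 \<le> x ^ k0" using assms by (intro power_increasing) auto
  moreover have "y ^ 2 \<le> y ^ ks" using assms True by (intro power_increasing) auto
  ultimately show ?thesis using assms by (intro mult_mono) auto
next
  case False
  hence ks: "ks = 1" using assms by auto
  hence k0: "3 \<le> k0" using assms by auto
  have "x ^ 2 * y ^ 2 \<le> x ^ 2 * (x * y)" using assms
    by (intro mult_left_mono) (auto simp: power2_eq_square intro: mult_right_mono)
  also have "\<dots> = x ^ 3 * y" by (simp add: power_numeral_reduce)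
  also have "\<dots> \<le> x ^ k0 * y" using assms k0 by (intro mult_right_mono power_increasing) auto
  finally show ?thesis using ks by simp
qed

definition Aset :: "nat \<Rightarrow> nat list set" where
  "Aset r = {ns. length ns = r \<and> sorted_wrt (\<ge>) ns \<and> (\<forall>n\<in>set ns. n \<ge> 1)}"
definition Cset :: "nat \<Rightarrow> nat list set" where
  "Cset r = {ns. length ns = Suc r \<and> sorted_wrt (\<ge>) ns \<and> (\<forall>n\<in>set ns. n \<ge> 2)}"
definition fz :: "(nat \<Rightarrow> nat) \<Rightarrow> nat \<Rightarrow> nat list \<Rightarrow> real" where
  "fz k r ns = 1 / (\<Prod>i<r. real (ns!i) ^ k i)"
definition gz :: "(nat \<Rightarrow> nat) \<Rightarrow> nat \<Rightarrow> nat list \<Rightarrow> real" where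
  "gz k r ns = 1 / (\<Prod>i<Suc r. real (ns!i) ^ (if i < r then k i else 1))"

lemma Z1: "zeta_star (map k [0..<r]) = infsum (fz k r) (Aset r)"
  unfolding zeta_star_def Aset_def fz_def length_map length_upt diff_zero
  by (intro infsum_cong arg_cong[where f="\<lambda>x. 1 / x"] prod.cong) auto

lemma Z2: "zeta_star (map k [0..<r] @ [1]) = infsum (gz k r) (Aset (Suc r))"
proof -
  have l: "length (map k [0..<r] @ [1]) = Suc r" by simp
  show ?thesis
  unfolding zeta_star_def Aset_def gz_def l
  by (intro infsum_cong arg_cong[where f="\<lambda>x. 1 / x"] prod.cong) (auto simp: nth_append)
qed

lemma Aset_decomp: "Aset (Suc r) = (\<lambda>ns. ns @ [1]) ` Aset r \<union> Cset r"
proof (rule set_eqI)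
  fix ns
  show "ns \<in> Aset (Suc r) \<longleftrightarrow> ns \<in> (\<lambda>ns. ns @ [1]) ` Aset r \<union> Cset r"
  proof
    assume a: "ns \<in> Aset (Suc r)"
    then obtain xs y where ns: "ns = xs @ [y]" unfolding Aset_def by (cases ns rule: rev_exhaust) auto
    show "ns \<in> (\<lambda>ns. ns @ [1]) ` Aset r \<union> Cset r"
    proof (cases "y = 1")
      case True
      have "xs \<in> Aset r" using a unfolding ns Aset_def by (auto simp: sorted_wrt_append)
      thus ?thesis using True ns by blast
    next
      case False
      hence "ns \<in> Cset r" using a unfolding ns Aset_def Cset_def
        by (fastforce simp: sorted_wrt_append)
      thus ?thesis by blast
    qed
  next
    assume "ns \<in> (\<lambda>ns. ns @ [1]) ` Aset r \<union> Cset r"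
    thus "ns \<in> Aset (Suc r)" unfolding Aset_def Cset_def by (auto simp: sorted_wrt_append)
  qed
qed

lemma Aset_disj: "(\<lambda>ns. ns @ [1]) ` Aset r \<inter> Cset r = {}"
  unfolding Aset_def Cset_def by auto

lemma gz_app: "length ns = r \<Longrightarrow> gz k r (ns @ [1]) = fz k r ns"
  unfolding gz_def fz_def by (simp add: nth_append)

lemma gz_nonneg: "0 \<le> gz k r ns"
  unfolding gz_def by (simp add: prod_nonneg)

lemma finite_bound_lists:
  assumes "finite (F :: nat list set)"
  shows "\<exists>N. \<forall>ns\<in>F. set ns \<subseteq> {..N}"
proof -
  have "finite (\<Union>ns\<in>F. set ns)" using assms by auto
  then obtain N where "\<forall>x\<in>(\<Union>ns\<in>F. set ns). x \<le> N" using finite_nat_set_iff_bounded_le by blast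
  thus ?thesis by auto
qed


lemma pow_ge: "1 \<le> (x::real) \<Longrightarrow> 1 \<le> e \<Longrightarrow> x \<le> x ^ e"
  using power_increasing[of 1 e x] by simp

lemma Dl_elem: "ns \<in> Dl j lo hi \<Longrightarrow> i < j \<Longrightarrow> lo \<le> ns ! i"
  unfolding Dl_def by (auto dest!: nth_mem)

lemma P1:
  assumes k1: "\<And>i. k i \<ge> 1" and k0: "k 0 \<ge> 2" and r: "r \<ge> 1" and ns: "ns \<in> Dl (Suc r) 1 N"
  shows "gz k r ns \<le> PW (\<lambda>i y. if i = 0 then 1 / real y ^ 2 else 1 / real y) ns"
proof -
  have len: "length ns = Suc r" using ns by (simp add: Dl_def)
  have ge1: "1 \<le> real (ns ! i)" if "i < Suc r" for i using Dl_elem[OF ns that] by simp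
  define a where "a i = real (ns!i) ^ (if i < r then k i else 1)" for i
  define b where "b i = (if i = 0 then real (ns!i) ^ 2 else real (ns!i))" for i
  have ab: "b i \<le> a i" if "i < Suc r" for i
  proof (cases "i = 0")
    case True
    thus ?thesis using ge1[OF that] r k0 unfolding a_def b_def by (auto intro: power_increasing)
  next
    case False
    have "real (ns!i) \<le> real (ns!i) ^ (if i < r then k i else 1)"
      by (rule pow_ge[OF ge1[OF that]]) (use k1[of i] in auto)
    thus ?thesis using False unfolding a_def b_def by simp
  qed
  have "1 / (\<Prod>i<Suc r. a i) \<le> (\<Prod>i<Suc r. 1 / b i)"
  proof (rule recip_prod_le[of 1])
    show "0 < b i" if "i < Suc r" for i using ge1[OF that] unfolding b_def by auto
    have "0 \<le> a 0" unfolding a_def by simp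
    then show "b 0 * b 1 \<le> a 0 * a 1"
      using ab[of 0] ab[of 1] r ge1[of 0] ge1[of 1] unfolding b_def
      by (intro mult_mono) auto
  qed (use r ab in auto)
  moreover have "gz k r ns = 1 / (\<Prod>i<Suc r. a i)" unfolding gz_def a_def ..
  moreover have "(\<Prod>i<Suc r. 1 / b i) = PW (\<lambda>i y. if i = 0 then 1 / real y ^ 2 else 1 / real y) ns"
    unfolding PW_def len b_def by (intro prod.cong) auto
  ultimately show ?thesis by simp
qed

lemma P2:
  assumes k1: "\<And>i. k i \<ge> 1" and k0: "k 0 \<ge> 2" and ks: "k 0 + k s \<ge> 4" and s: "0 < s" "s < R"
    and ns: "ns \<in> Dl (Suc R) 2 N"
  shows "gz k R ns \<le> PW (\<lambda>i y. if i = 0 \<or> i = s then 1 / real y ^ 2 else 1 / real y) ns"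
proof -
  have len: "length ns = Suc R" using ns by (simp add: Dl_def)
  have ge1: "1 \<le> real (ns ! i)" if "i < Suc R" for i using Dl_elem[OF ns that] by simp
  have srt: "ns ! s \<le> ns ! 0"
    using ns s unfolding Dl_def by (auto dest: sorted_wrt_nth_less[of _ ns 0 s])
  define a where "a i = real (ns!i) ^ (if i < R then k i else 1)" for i
  define b where "b i = (if i = 0 \<or> i = s then real (ns!i) ^ 2 else real (ns!i))" for i
  have "1 / (\<Prod>i<Suc R. a i) \<le> (\<Prod>i<Suc R. 1 / b i)"
  proof (rule recip_prod_le[of s])
    show "0 < b i" if "i < Suc R" for i using ge1[OF that] unfolding b_def by auto
    have e: "a 0 = real (ns!0) ^ k 0" "a s = real (ns!s) ^ k s" "b 0 = real (ns!0) ^ 2" "b s = real (ns!s) ^ 2"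
      using s unfolding a_def b_def by auto
    show "b 0 * b s \<le> a 0 * a s"
      unfolding e
      by (rule pow_pair) (use s ge1[of 0] ge1[of s] srt k0 k1[of s] ks in auto)
    show "b i \<le> a i" if "i < Suc R" "i \<noteq> 0" "i \<noteq> s" for i
    proof -
      have "real (ns!i) \<le> real (ns!i) ^ (if i < R then k i else 1)"
        by (rule pow_ge[OF ge1[OF that(1)]]) (use k1[of i] in auto)
      thus ?thesis using that unfolding a_def b_def by simp
    qed
  qed (use s in auto)
  moreover have "gz k R ns = 1 / (\<Prod>i<Suc R. a i)" unfolding gz_def a_def ..
  moreover have "(\<Prod>i<Suc R. 1 / b i) = PW (\<lambda>i y. if i = 0 \<or> i = s then 1 / real y ^ 2 else 1 / real y) ns"
    unfolding PW_def len b_def by (intro prod.cong) auto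
  ultimately show ?thesis by simp
qed


lemma sumA:
  assumes k1: "\<And>i. k i \<ge> 1" and k0: "k 0 \<ge> 2" and r: "r \<ge> 1"
  shows "gz k r summable_on Aset (Suc r)"
proof (rule nonneg_bdd_above_summable_on)
  show "0 \<le> gz k r x" for x by (rule gz_nonneg)
  obtain B where B: "\<And>N. (\<Sum>x=1..N. (harm x :: real) ^ r / real x ^ 2) \<le> B"
    using harm_sq_bound[of r] r by auto
  define w1 :: "nat \<Rightarrow> nat \<Rightarrow> real" where "w1 = (\<lambda>i y. if i = 0 then 1 / real y ^ 2 else 1 / real y)"
  have e: "(\<lambda>i. w1 (Suc i)) = (\<lambda>_ y. 1 / real y)" by (auto simp: w1_def fun_eq_iff)
  have "sum (gz k r) F \<le> B" if F: "F \<subseteq> Aset (Suc r)" "finite F" for F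
  proof -
    obtain N where N: "\<forall>ns\<in>F. set ns \<subseteq> {..N}" using finite_bound_lists[OF F(2)] by blast
    have sub: "F \<subseteq> Dl (Suc r) 1 N" using F(1) N unfolding Aset_def Dl_def by (auto simp: subset_iff)
    have "sum (gz k r) F \<le> sum (gz k r) (Dl (Suc r) 1 N)"
      by (rule sum_mono2[OF finite_Dl sub]) (simp add: gz_nonneg)
    also have "\<dots> \<le> sum (PW w1) (Dl (Suc r) 1 N)"
      unfolding w1_def by (intro sum_mono P1 k1 k0 r)
    also have "\<dots> = (\<Sum>x=1..N. (1 / real x ^ 2) * (\<Sum>xs\<in>Dl r 1 x. PW (\<lambda>_ y. 1 / real y) xs))"
      by (simp add: sum_Dl_Suc PW_Cons sum_distrib_left e) (simp add: w1_def)
    also have "\<dots> \<le> (\<Sum>x=1..N. (1 / real x ^ 2) * harm x ^ r)"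
      by (intro sum_mono mult_left_mono ones_bound) auto
    also have "\<dots> = (\<Sum>x=1..N. (harm x :: real) ^ r / real x ^ 2)" by simp
    also have "\<dots> \<le> B" by (rule B)
    finally show ?thesis .
  qed
  thus "bdd_above (sum (gz k r) ` {F. F \<subseteq> Aset (Suc r) \<and> finite F})"
    by (intro bdd_aboveI2[of _ _ B]) auto
qed

lemma sumC:
  assumes k1: "\<And>i. k i \<ge> 1" and k0: "k 0 \<ge> 2" and ks: "k 0 + k s \<ge> 4" and s: "s \<ge> 1"
  shows "(\<lambda>p. gz k (fst p + s + 1) (snd p)) summable_on Sigma UNIV (\<lambda>r. Cset (r + s + 1))"
proof (rule nonneg_bdd_above_summable_on)
  show "0 \<le> gz k (fst x + s + 1) (snd x)" for x by (rule gz_nonneg)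
  obtain B where B: "\<And>N. (\<Sum>x=1..N. (harm x :: real) ^ s / real x ^ 2) \<le> B"
    using harm_sq_bound[of s] s by auto
  define ws :: "nat \<Rightarrow> nat \<Rightarrow> real" where "ws = (\<lambda>i y. if i = 0 \<or> i = s then 1 / real y ^ 2 else 1 / real y)"
  have e: "(\<lambda>i. ws (Suc i)) = wt (s - 1)" using s by (auto simp: ws_def wt_def fun_eq_iff)
  let ?f = "\<lambda>p. gz k (fst p + s + 1) (snd p)"
  have "sum ?f F \<le> B" if F: "F \<subseteq> Sigma UNIV (\<lambda>r. Cset (r + s + 1))" "finite F" for F
  proof -
    obtain N where N: "\<forall>ns\<in>snd ` F. set ns \<subseteq> {..N}"
      using finite_bound_lists[of "snd ` F"] F(2) by blast
    obtain R where R: "\<forall>r\<in>fst ` F. r \<le> R"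
      using finite_nat_set_iff_bounded_le[of "fst ` F"] F(2) by blast
    have sub: "F \<subseteq> Sigma {..R} (\<lambda>r. Dl (Suc (r + s + 1)) 2 N)"
    proof
      fix p assume p: "p \<in> F"
      obtain r ns where pe: "p = (r, ns)" by (cases p)
      show "p \<in> Sigma {..R} (\<lambda>r. Dl (Suc (r + s + 1)) 2 N)"
        using p F(1) N R unfolding pe Cset_def Dl_def by force
    qed
    have fin: "finite (Sigma {..R} (\<lambda>r. Dl (Suc (r + s + 1)) 2 N))"
      by (intro finite_SigmaI finite_Dl) auto
    have "sum ?f F \<le> sum ?f (Sigma {..R} (\<lambda>r. Dl (Suc (r + s + 1)) 2 N))"
      by (rule sum_mono2[OF fin sub]) (simp add: gz_nonneg)
    also have "\<dots> = (\<Sum>r\<le>R. \<Sum>ns\<in>Dl (Suc (r + s + 1)) 2 N. gz k (r + s + 1) ns)"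
      by (subst sum.Sigma) (auto simp: finite_Dl case_prod_beta)
    also have "\<dots> \<le> (\<Sum>r\<le>R. \<Sum>ns\<in>Dl (Suc (r + s + 1)) 2 N. PW ws ns)"
      unfolding ws_def by (intro sum_mono P2 k1 k0 ks) (use s in auto)
    also have "\<dots> = (\<Sum>x=2..N. (1 / real x ^ 2) * (\<Sum>r\<le>R. \<Sum>xs\<in>Dl ((s - 1) + 1 + Suc r) 2 x. PW (wt (s - 1)) xs))"
    proof -
      have "r + s + 1 = (s - 1) + 1 + Suc r" for r using s by simp
      hence "(\<Sum>r\<le>R. \<Sum>ns\<in>Dl (Suc (r + s + 1)) 2 N. PW ws ns)
          = (\<Sum>r\<le>R. \<Sum>x=2..N. (1 / real x ^ 2) * (\<Sum>xs\<in>Dl ((s - 1) + 1 + Suc r) 2 x. PW (wt (s - 1)) xs))"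
        by (simp only: sum_Dl_Suc PW_Cons e) (simp add: ws_def sum_divide_distrib)
      also have "\<dots> = (\<Sum>x=2..N. (1 / real x ^ 2) * (\<Sum>r\<le>R. \<Sum>xs\<in>Dl ((s - 1) + 1 + Suc r) 2 x. PW (wt (s - 1)) xs))"
        by (simp add: sum_distrib_left sum.swap[of _ "{2..N}"])
      finally show ?thesis .
    qed
    also have "\<dots> \<le> (\<Sum>x=2..N. (1 / real x ^ 2) * harm x ^ s)"
    proof (intro sum_mono mult_left_mono)
      fix x
      let ?h = "\<lambda>m. \<Sum>xs\<in>Dl ((s - 1) + 1 + m) 2 x. PW (wt (s - 1)) xs"
      have h0: "0 \<le> ?h 0" by (intro sum_nonneg PW_nonneg) (auto simp: wt_def)
      have "(\<Sum>r\<le>R. ?h (Suc r)) \<le> ?h 0 + (\<Sum>r\<le>R. ?h (Suc r))" using h0 by simp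
      also have "\<dots> = (\<Sum>m\<le>Suc R. ?h m)" by (simp only: sum.atMost_Suc_shift[of ?h R])
      also have "\<dots> \<le> harm x ^ (s - 1 + 1)" by (rule mid_bound)
      finally show "(\<Sum>r\<le>R. ?h (Suc r)) \<le> harm x ^ s" using s by simp
    qed auto
    also have "\<dots> \<le> (\<Sum>x=1..N. (harm x :: real) ^ s / real x ^ 2)"
      by (rule order_trans[OF _ sum_Icc_2_le_1]) (auto intro!: harm_nonneg divide_nonneg_nonneg zero_le_power)
    also have "\<dots> \<le> B" by (rule B)
    finally show ?thesis .
  qed
  thus "bdd_above (sum ?f ` {F. F \<subseteq> Sigma UNIV (\<lambda>r. Cset (r + s + 1)) \<and> finite F})"
    by (intro bdd_aboveI2[of _ _ B]) auto
qed


theorem lemma3p2: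
  fixes k :: "nat \<Rightarrow> nat"
  assumes "in_T k"
  shows "(\<lambda>r. zeta_star (map k [0..<r] @ [1]) - zeta_star (map k [0..<r])) \<longlonglongrightarrow> 0"
proof -
  have k1: "\<And>i. k i \<ge> 1" and k0: "k 0 \<ge> 2" using assms by (auto simp: in_T_def)
  obtain s where s: "s \<ge> 1" "k 0 + k s \<ge> 4"
  proof (cases "k 0 = 2")
    case True
    then obtain s where "s \<ge> 1" "k s \<ge> 2" using assms by (auto simp: in_T_def)
    thus ?thesis using that True by auto
  next
    case False
    thus ?thesis using that[of 1] k0 k1[of 1] by auto
  qed
  define c where "c r = infsum (gz k (r + s + 1)) (Cset (r + s + 1))" for r
  have sA: "gz k R summable_on Aset (Suc R)" if "R \<ge> 1" for R
    by (rule sumA[of k, OF k1 k0 that])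
  have CA: "Cset R \<subseteq> Aset (Suc R)" for R using Aset_decomp[of R] by blast
  have sC: "gz k R summable_on Cset R" if "R \<ge> 1" for R
    by (rule summable_on_subset[OF sA[OF that] CA])
  have "(\<lambda>r. infsum (\<lambda>y. (\<lambda>p. gz k (fst p + s + 1) (snd p)) (r, y)) (Cset (r + s + 1))) summable_on UNIV"
    by (rule summable_on_SigmaD[OF sumC[of k, OF k1 k0 s(2) s(1)]]) (use sC in simp)
  hence "c summable_on UNIV" unfolding c_def by simp
  hence "summable c"
    by (subst (asm) summable_on_UNIV_nonneg_real_iff) (auto simp: c_def intro!: infsum_nonneg gz_nonneg)
  hence climit: "c \<longlonglongrightarrow> 0" by (rule summable_LIMSEQ_zero)
  have eq: "zeta_star (map k [0..<R] @ [1]) - zeta_star (map k [0..<R]) = infsum (gz k R) (Cset R)"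
    if R: "R \<ge> 1" for R
  proof -
    let ?I = "(\<lambda>ns. ns @ [1]) ` Aset R"
    have sI: "gz k R summable_on ?I"
      by (rule summable_on_subset[OF sA[OF R]]) (use Aset_decomp[of R] in blast)
    have "zeta_star (map k [0..<R] @ [1]) = infsum (gz k R) (?I \<union> Cset R)"
      unfolding Z2 Aset_decomp ..
    also have "\<dots> = infsum (gz k R) ?I + infsum (gz k R) (Cset R)"
      by (rule infsum_Un_disjoint[OF sI sC[OF R] Aset_disj])
    also have "infsum (gz k R) ?I = infsum (gz k R \<circ> (\<lambda>ns. ns @ [1])) (Aset R)"
      by (rule infsum_reindex) (auto simp: inj_on_def)
    also have "\<dots> = infsum (fz k R) (Aset R)"
    proof (rule infsum_cong)
      fix ns assume "ns \<in> Aset R"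
      hence "length ns = R" by (simp add: Aset_def)
      thus "(gz k R \<circ> (\<lambda>ns. ns @ [1])) ns = fz k R ns" using gz_app[of ns R k] by simp
    qed
    finally show ?thesis unfolding Z1 by simp
  qed
  define D where "D r = zeta_star (map k [0..<r] @ [1]) - zeta_star (map k [0..<r])" for r
  have Dc: "D (n + (s + 1)) = c n" for n
  proof -
    have "D (n + (s + 1)) = infsum (gz k (n + (s + 1))) (Cset (n + (s + 1)))"
      unfolding D_def by (rule eq) simp
    also have "\<dots> = c n" unfolding c_def by (simp only: add.assoc)
    finally show ?thesis .
  qed
  have "(\<lambda>n. D (n + (s + 1))) \<longlonglongrightarrow> 0" unfolding Dc by (rule climit)
  hence "D \<longlonglongrightarrow> 0" by (rule LIMSEQ_offset)
  thus ?thesis unfolding D_def .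
qed

end
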